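(* For $n,p\ge1$, the number $\alpha'_{n,p}$ of saturated $n\times p$ tableaux in which a fixed given cell is marked (independent of the chosen cell) satisfies $$\alpha'_{n,p}=\frac1{np}\left.\frac{d}{dt}\alpha_{n,p}(t)\right|_{t=1}=-(n-1)!\sum_{i=0}^n\frac{r_{n-i+1}}{(n-i)!}\sum_{\lambda\vdash i}\frac{P'_\lambda(1)\,(1+P_\lambda(1))^{p-1}}{\lambda!}.$$
   Context: An $n\times p$ tableau is a set of marked cells in an $n\times p$ grid; it is saturated if whenever cells $(x,x'),(x,y'),(y,y')$ are marked then $(y,x')$ is marked. $\alpha_{n,p}(t)=\sum_j\alpha_{j;n,p}t^j$ with $\alpha_{j;n,p}$ the number of saturated $n\times p$ tableaux with $j$ marked cells. For an integer partition $\lambda=[\lambda_1,\dots,\lambda_k]$, $P_\lambda(t)=\sum_j t^{\lambda_j}$, $P'_\lambda$ its derivative, and $\lambda!=\left(\prod_j\lambda_j!\right)\left(\prod_i\mathrm{mult}_i(\lambda)!\right)$ with $\mathrm{mult}_i(\lambda)$ the number of parts equal to $i$. $r_k$ are the Rao Uppuluri-Carpenter numbers: $\sum_{k\ge0}r_k\frac{t^k}{k!}=\exp(1-e^t)$. *)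

theory Defs
  imports "HOL-Computational_Algebra.Computational_Algebra" "HOL-Library.Multiset"
begin

text \<open>Cells of an n x p grid are pairs (row, column) with row < n, column < p (0-based).
  A tableau is a set of marked cells.\<close>
definition tableau :: "nat \<Rightarrow> nat \<Rightarrow> (nat \<times> nat) set \<Rightarrow> bool" where
  "tableau n p T \<longleftrightarrow> T \<subseteq> {0..<n} \<times> {0..<p}"

definition saturated :: "(nat \<times> nat) set \<Rightarrow> bool" where
  "saturated T \<longleftrightarrow> (\<forall>x y x' y'. (x,x') \<in> T \<and> (x,y') \<in> T \<and> (y,y') \<in> T \<longrightarrow> (y,x') \<in> T)"

definition alpha_coeff :: "nat \<Rightarrow> nat \<Rightarrow> nat \<Rightarrow> nat" where
  "alpha_coeff j n p = card {T. tableau n p T \<and> saturated T \<and> card T = j}"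

text \<open>alpha_{n,p}(t) = sum_j alpha_{j;n,p} t^j (j ranges over 0..np, the only nonzero terms).\<close>
definition alpha_poly :: "nat \<Rightarrow> nat \<Rightarrow> real poly" where
  "alpha_poly n p = (\<Sum>j\<le>n*p. monom (real (alpha_coeff j n p)) j)"

definition rUC :: "nat \<Rightarrow> real" where
  "rUC k = fact k * fps_nth (fps_compose (fps_exp 1) (1 - fps_exp 1)) k"

definition partitions_of :: "nat \<Rightarrow> nat multiset set" where
  "partitions_of i = {lam. (\<forall>k\<in>#lam. 0 < k) \<and> sum_mset lam = i}"

definition P_part :: "nat multiset \<Rightarrow> real poly" where
  "P_part lam = sum_mset (image_mset (\<lambda>k. monom 1 k) lam)"

definition part_fact :: "nat multiset \<Rightarrow> real" where
  "part_fact lam = prod_mset (image_mset fact lam) * (\<Prod>i\<in>set_mset lam. fact (count lam i))"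

end

theory Submission
  imports Defs
begin

definition EE :: "real fps" where "EE = fps_exp 1"
definition uu :: "real fps" where "uu = EE - 1"
definition RR :: "real fps" where "RR = fps_exp 1 oo (1 - fps_exp 1)"
definition GG :: "nat \<Rightarrow> real fps" where "GG q = Abs_fps (\<lambda>k. (of_nat (k+1))^q / fact k)"
definition Phi :: "nat \<Rightarrow> real fps" where "Phi q = GG q oo uu"
definition Acal :: "nat \<Rightarrow> real fps" where "Acal q = EE * RR * Phi q"

lemma uu0[simp]: "uu $ 0 = 0" by (simp add: uu_def EE_def)

lemma deriv_EE[simp]: "fps_deriv EE = EE" by (simp add: EE_def)
lemma deriv_uu[simp]: "fps_deriv uu = EE" by (simp add: uu_def)

lemma deriv_RR: "fps_deriv RR = - (EE * RR)"
proof -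
  have "fps_deriv RR = (fps_deriv (fps_exp (1::real)) oo (1 - fps_exp 1)) * fps_deriv (1 - fps_exp 1)"
    unfolding RR_def by (rule fps_compose_deriv) simp
  also have "\<dots> = - (EE * RR)" by (simp add: RR_def EE_def)
  finally show ?thesis .
qed

lemma deriv_GG: "fps_deriv (GG q) = (\<Sum>e\<le>q. fps_const (of_nat (q choose e)) * GG (q - e))"
proof (rule fps_ext)
  fix k
  have "fps_deriv (GG q) $ k = (of_nat (k+2))^q / fact k"
    by (simp add: GG_def field_simps del: of_nat_Suc)
  also have "(of_nat (k+2)::real)^q = (1 + of_nat (k+1))^q" by simp
  also have "\<dots> = (\<Sum>e\<le>q. of_nat (q choose e) * 1^e * (of_nat (k+1))^(q-e))"
    by (rule binomial_ring)
  finally show "fps_deriv (GG q) $ k = (\<Sum>e\<le>q. fps_const (of_nat (q choose e)) * GG (q - e)) $ k"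
    by (simp add: fps_sum_nth GG_def sum_divide_distrib)
qed

lemma compose_lin: "(\<Sum>e\<in>A. fps_const (c e) * F e) oo uu = (\<Sum>e\<in>A. fps_const (c e) * (F e oo uu))"
  by (simp add: fps_compose_sum_distrib fps_compose_mult_distrib)

lemma deriv_Phi: "fps_deriv (Phi q) = EE * (\<Sum>e\<le>q. fps_const (of_nat (q choose e)) * Phi (q - e))"
proof -
  have "fps_deriv (Phi q) = (fps_deriv (GG q) oo uu) * fps_deriv uu"
    unfolding Phi_def by (rule fps_compose_deriv) simp
  also have "\<dots> = EE * (\<Sum>e\<le>q. fps_const (of_nat (q choose e)) * Phi (q - e))"
    unfolding deriv_GG compose_lin by (simp add: Phi_def mult.commute)
  finally show ?thesis .
qed

lemma N_fps: "- (fps_deriv RR * fps_deriv (Phi q)) = EE * (\<Sum>e\<le>q. fps_const (of_nat (q choose e)) * Acal (q - e))"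
  by (simp add: deriv_RR deriv_Phi Acal_def sum_distrib_left algebra_simps sum_negf)

lemma deriv_Acal: "fps_deriv (Acal q) = Acal q + EE * (\<Sum>e\<in>{1..q}. fps_const (of_nat (q choose e)) * Acal (q - e))"
proof -
  have s: "(\<Sum>e\<le>q. f e) = f 0 + (\<Sum>e\<in>{1..q}. f e)" for f :: "nat \<Rightarrow> real fps"
    by (simp add: atMost_atLeast0 sum.atLeast_Suc_atMost)
  have "fps_deriv (Acal q) = EE * RR * Phi q - EE * Acal q + EE * (\<Sum>e\<le>q. fps_const (of_nat (q choose e)) * Acal (q - e))"
    by (simp add: Acal_def deriv_RR deriv_Phi sum_distrib_left algebra_simps)
  also have "\<dots> = Acal q + EE * (\<Sum>e\<in>{1..q}. fps_const (of_nat (q choose e)) * Acal (q - e))"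
    by (subst s) (simp add: Acal_def algebra_simps)
  finally show ?thesis .
qed

lemma Acal0[simp]: "Acal q $ 0 = 1"
  by (simp add: Acal_def EE_def RR_def Phi_def GG_def)

definition Anum :: "nat \<Rightarrow> nat \<Rightarrow> real" where "Anum m q = fact m * Acal q $ m"

lemma Anum0: "Anum 0 q = 1" by (simp add: Anum_def)

lemma EE_conv: "(EE * F) $ m * fact m = (\<Sum>j\<le>m. of_nat (m choose j) * (F $ j * fact j))"
proof -
  have "(EE * F) $ m * fact m = (\<Sum>i=0..m. fact m / fact i * F $ (m - i))"
    unfolding fps_mult_nth sum_distrib_right by (intro sum.cong refl) (simp add: EE_def)
  also have "\<dots> = (\<Sum>i=0..m. of_nat (m choose (m - i)) * (F $ (m - i) * fact (m - i)))"
    by (intro sum.cong refl) (simp add: binomial_fact field_simps)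
  also have "\<dots> = (\<Sum>j\<le>m. of_nat (m choose j) * (F $ j * fact j))"
    using sum.atLeastAtMost_rev[of "\<lambda>j. of_nat (m choose j) * (F $ j * fact j)" 0 m]
    by (simp add: atMost_atLeast0)
  finally show ?thesis .
qed

lemma Anum_rec: "Anum (Suc m) q = Anum m q +
   (\<Sum>e\<in>{1..q}. of_nat (q choose e) * (\<Sum>j\<le>m. of_nat (m choose j) * Anum j (q - e)))"
proof -
  have "Anum (Suc m) q = fps_deriv (Acal q) $ m * fact m"
    by (simp add: Anum_def fact_Suc)
  also have "\<dots> = Anum m q + (EE * (\<Sum>e\<in>{1..q}. fps_const (of_nat (q choose e)) * Acal (q - e))) $ m * fact m"
    by (simp add: deriv_Acal Anum_def algebra_simps)
  also have "(EE * (\<Sum>e\<in>{1..q}. fps_const (of_nat (q choose e)) * Acal (q - e))) $ m * fact m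
     = (\<Sum>e\<in>{1..q}. of_nat (q choose e) * ((EE * Acal (q - e)) $ m * fact m))"
  proof -
    have "EE * (\<Sum>e\<in>{1..q}. fps_const (of_nat (q choose e)) * Acal (q - e)) = 
       (\<Sum>e\<in>{1..q}. fps_const (of_nat (q choose e)) * (EE * Acal (q - e)))"
      by (simp add: sum_distrib_left mult.left_commute)
    then show ?thesis by (simp add: fps_sum_nth sum_distrib_right mult.assoc)
  qed
  also have "\<dots> = (\<Sum>e\<in>{1..q}. of_nat (q choose e) * (\<Sum>j\<le>m. of_nat (m choose j) * Anum j (q - e)))"
    apply (intro sum.cong refl)
    apply (subst EE_conv)
    apply (simp add: Anum_def mult.commute)
    done
  finally show ?thesis .
qed

lemma mem_le_sum_mset: "x \<in># (M::nat multiset) \<Longrightarrow> x \<le> sum_mset M"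
  by (induction M) auto

lemma size_le_sum_mset: "(\<forall>k\<in>#M. 0 < k) \<Longrightarrow> size M \<le> sum_mset (M::nat multiset)"
  by (induction M) auto

lemma partitions_sub: "partitions_of i \<subseteq> (\<Union>s\<le>i. multisets_of_size {0..i} s)"
proof
  fix lam assume "lam \<in> partitions_of i"
  then have "(\<forall>k\<in>#lam. 0 < k)" "sum_mset lam = i" by (auto simp: partitions_of_def)
  then show "lam \<in> (\<Union>s\<le>i. multisets_of_size {0..i} s)"
    using size_le_sum_mset[of lam] mem_le_sum_mset[of _ lam]
    by (auto simp: multisets_of_size_def)
qed

lemma finite_partitions[simp]: "finite (partitions_of i)"
  by (rule finite_subset[OF partitions_sub]) auto

lemma part_fact_add: "part_fact (add_mset x M) = part_fact M * fact x * of_nat (count M x + 1)"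
proof (cases "x \<in># M")
  case True
  have "(\<Prod>i\<in>set_mset (add_mset x M). fact (count (add_mset x M) i) :: real)
     = fact (count M x + 1) * (\<Prod>i\<in>set_mset M - {x}. fact (count M i))"
    using True by (simp add: insert_absorb prod.remove[of "set_mset M" x] )
  also have "\<dots> = of_nat (count M x + 1) * (\<Prod>i\<in>set_mset M. fact (count M i))"
    using True by (simp add: prod.remove[of "set_mset M" x])
  finally show ?thesis by (simp add: part_fact_def algebra_simps)
next
  case False
  have "(\<Prod>i\<in>set_mset (add_mset x M). fact (count (add_mset x M) i) :: real)
     = (\<Prod>i\<in>set_mset M. fact (count M i))"
  proof -
    have "(\<Prod>i\<in>set_mset (add_mset x M). fact (count (add_mset x M) i) :: real)
       = fact (count (add_mset x M) x) * (\<Prod>i\<in>set_mset M. fact (count (add_mset x M) i))"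
      using False by (simp add: prod.insert del: count_add_mset)
    also have "(\<Prod>i\<in>set_mset M. fact (count (add_mset x M) i) :: real) = (\<Prod>i\<in>set_mset M. fact (count M i))"
      using False by (intro prod.cong) auto
    finally show ?thesis using False by (simp add: not_in_iff)
  qed
  moreover have "count M x = 0" using False by (simp add: not_in_iff)
  ultimately show ?thesis unfolding part_fact_def by simp
qed

lemma part_fact_pos: "part_fact M > 0"
  by (induction M) (auto simp: part_fact_add, simp add: part_fact_def)

lemma sum_mset_count: "real (sum_mset M) = (\<Sum>x\<in>set_mset M. real (count M x) * real x)"
proof (induction M)
  case empty then show ?case by simp
next
  case (add x M)
  show ?case
  proof (cases "x \<in># M")
    case True
    then show ?thesis using add
      by (simp add: insert_absorb sum.remove[of "set_mset M" x] algebra_simps)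
  next
    case False
    then have "(\<Sum>y\<in>set_mset M. real (count (add_mset x M) y) * real y) = (\<Sum>y\<in>set_mset M. real (count M y) * real y)"
      by (intro sum.cong) auto
    then show ?thesis using add False by (simp add: not_in_iff)
  qed
qed

definition W :: "nat \<Rightarrow> nat \<Rightarrow> real" where
  "W i k = (\<Sum>lam\<in>{lam\<in>partitions_of i. size lam = k}. 1 / part_fact lam)"

lemma pointwise:
  assumes "x \<in># lam" "0 < x"
  shows "real (count lam x) * real x / part_fact lam = 1 / (fact (x - 1) * part_fact (lam - {#x#}))"
proof -
  define lam' where "lam' = lam - {#x#}"
  have l: "lam = add_mset x lam'" using assms by (simp add: lam'_def)
  have c: "count lam x = count lam' x + 1" using l by simp
  have f: "(fact x :: real) = real x * fact (x - 1)" using assms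
    by (simp add: fact_reduce)
  have pf: "part_fact lam = part_fact lam' * (real x * fact (x - 1)) * real (count lam x)"
    using l part_fact_add[of x lam'] c f by simp
  have cp: "real (count lam x) > 0" using assms by simp
  have p1: "part_fact lam' > 0" by (rule part_fact_pos)
  have p2: "(fact (x - 1) :: real) > 0" by simp
  show ?thesis unfolding pf lam'_def[symmetric] using cp p1 p2 assms(2)
    by (simp add: field_simps)
qed

lemma W1: "real (Suc i) * W (Suc i) (Suc k) = (\<Sum>j=0..i. W j k / fact (i - j))"
proof -
  define A where "A = {lam\<in>partitions_of (Suc i). size lam = Suc k}"
  define B where "B = (\<lambda>j. {mu\<in>partitions_of j. size mu = k})"
  have fA: "finite A" unfolding A_def by simp
  have "real (Suc i) * W (Suc i) (Suc k) = (\<Sum>lam\<in>A. real (sum_mset lam) / part_fact lam)"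
    unfolding W_def A_def sum_distrib_left by (intro sum.cong) (auto simp: partitions_of_def)
  also have "\<dots> = (\<Sum>lam\<in>A. \<Sum>x\<in>set_mset lam. real (count lam x) * real x / part_fact lam)"
    by (intro sum.cong refl) (simp only: sum_mset_count sum_divide_distrib)
  also have "\<dots> = (\<Sum>lam\<in>A. \<Sum>x\<in>set_mset lam. 1 / (fact (x - 1) * part_fact (lam - {#x#})))"
    by (intro sum.cong refl pointwise) (auto simp: A_def partitions_of_def)
  also have "\<dots> = (\<Sum>(lam,x)\<in>(SIGMA lam:A. set_mset lam). 1 / (fact (x - 1) * part_fact (lam - {#x#})))"
    using fA by (subst sum.Sigma) auto
  also have "\<dots> = (\<Sum>(j,mu)\<in>(SIGMA j:{0..i}. B j). 1 / (fact (i - j) * part_fact mu))"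
  proof (rule sum.reindex_bij_witness[where i = "\<lambda>(j,mu). (add_mset (Suc i - j) mu, Suc i - j)"
         and j = "\<lambda>(lam,x). (Suc i - x, lam - {#x#})"])
    fix a assume a: "a \<in> (SIGMA lam:A. set_mset lam)"
    obtain lam x where ax: "a = (lam, x)" by fastforce
    have xin: "x \<in># lam" and pos: "\<forall>k\<in>#lam. 0 < k" and s: "sum_mset lam = Suc i" and sz: "size lam = Suc k"
      using a ax by (auto simp: A_def partitions_of_def)
    have x0: "0 < x" using pos xin by auto
    have xle: "x \<le> Suc i" using mem_le_sum_mset[OF xin] s by simp
    have s2: "sum_mset (lam - {#x#}) = Suc i - x"
    proof -
      have "sum_mset lam = sum_mset (add_mset x (lam - {#x#}))"
        using xin by (simp only: insert_DiffM)
      also have "\<dots> = x + sum_mset (lam - {#x#})" by simp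
      finally show ?thesis using s by simp
    qed
    show "(\<lambda>(j,mu). (add_mset (Suc i - j) mu, Suc i - j)) ((\<lambda>(lam,x). (Suc i - x, lam - {#x#})) a) = a"
      using ax xin xle by simp
    have pos2: "\<forall>k\<in>#lam - {#x#}. 0 < k" using pos by (meson in_diffD)
    have sz2: "size (lam - {#x#}) = k" using sz xin by (simp add: size_Diff_singleton)
    show "(\<lambda>(lam,x). (Suc i - x, lam - {#x#})) a \<in> (SIGMA j:{0..i}. B j)"
      unfolding ax B_def partitions_of_def using x0 s2 sz2 pos2 by simp
    show "(\<lambda>(j, mu). 1 / (fact (i - j) * part_fact mu)) ((\<lambda>(lam,x). (Suc i - x, lam - {#x#})) a) =
          (\<lambda>(lam, x). 1 / (fact (x - 1) * part_fact (lam - {#x#}))) a"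
      using ax x0 xle by (simp add: Suc_diff_le)
  next
    fix b assume b: "b \<in> (SIGMA j:{0..i}. B j)"
    obtain j mu where bx: "b = (j, mu)" by fastforce
    have j: "j \<le> i" and pos: "\<forall>k\<in>#mu. 0 < k" and s: "sum_mset mu = j" and sz: "size mu = k"
      using b bx by (auto simp: B_def partitions_of_def)
    show "(\<lambda>(lam,x). (Suc i - x, lam - {#x#})) ((\<lambda>(j,mu). (add_mset (Suc i - j) mu, Suc i - j)) b) = b"
      using bx j by auto
    show "(\<lambda>(j,mu). (add_mset (Suc i - j) mu, Suc i - j)) b \<in> (SIGMA lam:A. set_mset lam)"
      unfolding bx A_def partitions_of_def using j pos s sz by simp
  qed
  also have "\<dots> = (\<Sum>j=0..i. \<Sum>mu\<in>B j. 1 / (fact (i - j) * part_fact mu))"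
    by (subst sum.Sigma) (auto simp: B_def)
  also have "\<dots> = (\<Sum>j=0..i. W j k / fact (i - j))"
    unfolding W_def B_def sum_divide_distrib by (intro sum.cong refl) (simp add: field_simps)
  finally show ?thesis .
qed

lemma partitions_zero: "partitions_of 0 = {{#}}"
proof -
  have "lam = {#}" if "\<forall>k\<in>#lam. 0 < k" "sum_mset lam = 0" for lam :: "nat multiset"
    using that by (cases lam) auto
  then show ?thesis by (auto simp: partitions_of_def)
qed

lemma part_fact_empty[simp]: "part_fact {#} = 1" by (simp add: part_fact_def)

lemma W_0: "W i 0 = (if i = 0 then 1 else 0)"
proof -
  have "{lam\<in>partitions_of i. size lam = 0} = (if i = 0 then {{#}} else {})"
    by (auto simp: partitions_of_def)
  then show ?thesis by (simp add: W_def)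
qed

lemma W_zero_Suc: "W 0 (Suc k) = 0"
  by (simp add: W_def partitions_zero)

lemma W_fps: "Abs_fps (\<lambda>i. W i k) = fps_const (1 / fact k) * uu ^ k"
proof (induction k)
  case 0
  show ?case by (rule fps_ext) (simp add: W_0)
next
  case (Suc k)
  have d: "fps_deriv (Abs_fps (\<lambda>i. W i (Suc k))) = Abs_fps (\<lambda>i. W i k) * EE"
  proof (rule fps_ext)
    fix i
    show "fps_deriv (Abs_fps (\<lambda>i. W i (Suc k))) $ i = (Abs_fps (\<lambda>i. W i k) * EE) $ i"
      using W1[of i k] by (simp add: fps_mult_nth EE_def del: of_nat_Suc)
  qed
  have d2: "fps_deriv (fps_const (1 / fact (Suc k)) * uu ^ Suc k) = fps_const (1 / fact k) * uu ^ k * EE"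
  proof -
    have "fps_deriv (fps_const (1 / fact (Suc k)) * uu ^ Suc k) = fps_const (1 / fact (Suc k)) * (fps_const (of_nat (Suc k)) * EE * uu ^ k)"
    proof -
      have "fps_deriv (uu ^ Suc k) = fps_const (of_nat (Suc k)) * fps_deriv uu * uu ^ (Suc k - 1)"
        by (rule fps_deriv_power)
      then show ?thesis by (simp del: of_nat_Suc power_Suc)
    qed
    also have "\<dots> = fps_const (1 / fact (Suc k) * of_nat (Suc k)) * uu ^ k * EE"
      by (simp add: fps_const_mult[symmetric] mult_ac del: of_nat_Suc fps_const_mult)
    also have "1 / fact (Suc k) * of_nat (Suc k) = (1 / fact k :: real)"
      by (simp add: fact_Suc field_simps del: of_nat_Suc)
    finally show ?thesis .
  qed
  have "fps_deriv (Abs_fps (\<lambda>i. W i (Suc k))) = fps_deriv (fps_const (1 / fact (Suc k)) * uu ^ Suc k)"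
    using d d2 Suc.IH by simp
  then have "Abs_fps (\<lambda>i. W i (Suc k)) = fps_const (Abs_fps (\<lambda>i. W i (Suc k)) $ 0 - (fps_const (1 / fact (Suc k)) * uu ^ Suc k) $ 0) + fps_const (1 / fact (Suc k)) * uu ^ Suc k"
    by (rule iffD1[OF fps_deriv_eq_iff])
  then show ?case by (simp add: W_zero_Suc startsby_zero_power)
qed

lemma W_eq: "W i k = (uu ^ k) $ i / fact k"
proof -
  have "Abs_fps (\<lambda>i. W i k) $ i = (fps_const (1 / fact k) * uu ^ k) $ i" by (simp only: W_fps)
  then show ?thesis by simp
qed

lemma P_part_add: "P_part (add_mset x M) = monom 1 x + P_part M"
  by (simp add: P_part_def)

lemma poly_P_part: "poly (P_part lam) 1 = real (size lam)"
  by (induction lam) (simp_all add: P_part_add poly_monom, simp add: P_part_def)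

lemma poly_pderiv_P_part: "poly (pderiv (P_part lam)) 1 = real (sum_mset lam)"
  by (induction lam) (simp_all add: P_part_add poly_monom pderiv_add pderiv_monom, simp add: P_part_def)

lemma group_size:
  "(\<Sum>lam\<in>partitions_of i. f (size lam) / part_fact lam) = (\<Sum>k=0..i. f k * W i k)"
proof -
  have "(\<Sum>lam\<in>partitions_of i. f (size lam) / part_fact lam)
     = (\<Sum>k\<in>{0..i}. \<Sum>lam\<in>{lam. lam \<in> partitions_of i \<and> size lam = k}. f (size lam) / part_fact lam)"
  proof (rule sum.group[symmetric])
    show "size ` partitions_of i \<subseteq> {0..i}"
      using size_le_sum_mset by (auto simp: partitions_of_def)
  qed auto
  also have "\<dots> = (\<Sum>k=0..i. f k * W i k)"
    unfolding W_def sum_distrib_left by (intro sum.cong refl) auto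
  finally show ?thesis .
qed

lemma inner_eq:
  "(\<Sum>lam\<in>partitions_of i. poly (pderiv (P_part lam)) 1 * (1 + poly (P_part lam) 1) ^ q / part_fact lam)
   = real i * Phi q $ i"
proof -
  have "(\<Sum>lam\<in>partitions_of i. poly (pderiv (P_part lam)) 1 * (1 + poly (P_part lam) 1) ^ q / part_fact lam)
     = real i * (\<Sum>lam\<in>partitions_of i. (1 + real (size lam)) ^ q / part_fact lam)"
    unfolding sum_distrib_left
    by (intro sum.cong refl) (simp add: poly_P_part poly_pderiv_P_part partitions_of_def)
  also have "(\<Sum>lam\<in>partitions_of i. (1 + real (size lam)) ^ q / part_fact lam) = (\<Sum>k=0..i. (1 + real k) ^ q * W i k)"
    by (rule group_size)
  also have "\<dots> = Phi q $ i"
    unfolding Phi_def fps_compose_nth W_eq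
    by (intro sum.cong refl) (simp add: GG_def add.commute)
  finally show ?thesis .
qed

lemma rUC_RR: "rUC (Suc k) / fact k = fps_deriv RR $ k"
  by (simp add: rUC_def RR_def fact_Suc del: of_nat_Suc)

definition Nnum :: "nat \<Rightarrow> nat \<Rightarrow> real" where
  "Nnum m q = (\<Sum>e\<le>q. of_nat (q choose e) * (\<Sum>j\<le>m. of_nat (m choose j) * Anum j (q - e)))"

lemma RHS_eq:
  "- fact m * (\<Sum>i = 0..Suc m. rUC (Suc m - i + 1) / fact (Suc m - i) *
                 (\<Sum>lam\<in>partitions_of i.
                     poly (pderiv (P_part lam)) 1 * (1 + poly (P_part lam) 1) ^ q
                     / part_fact lam)) = Nnum m q"
proof -
  have "(\<Sum>i = 0..Suc m. rUC (Suc m - i + 1) / fact (Suc m - i) *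
                 (\<Sum>lam\<in>partitions_of i.
                     poly (pderiv (P_part lam)) 1 * (1 + poly (P_part lam) 1) ^ q
                     / part_fact lam))
     = (\<Sum>i = 0..Suc m. fps_deriv RR $ (Suc m - i) * (real i * Phi q $ i))"
    by (intro sum.cong refl) (simp only: inner_eq Suc_eq_plus1[symmetric] rUC_RR)
  also have "\<dots> = (\<Sum>i = 0..m. fps_deriv RR $ (m - i) * (fps_deriv (Phi q) $ i))"
    by (subst sum.atLeast0_atMost_Suc_shift) (simp add: algebra_simps del: of_nat_Suc)
  also have "\<dots> = (fps_deriv (Phi q) * fps_deriv RR) $ m"
    unfolding fps_mult_nth by (intro sum.cong refl) (rule mult.commute)
  finally have 1: "- fact m * (\<Sum>i = 0..Suc m. rUC (Suc m - i + 1) / fact (Suc m - i) *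
                 (\<Sum>lam\<in>partitions_of i.
                     poly (pderiv (P_part lam)) 1 * (1 + poly (P_part lam) 1) ^ q
                     / part_fact lam)) = (- (fps_deriv RR * fps_deriv (Phi q))) $ m * fact m"
    by (simp add: mult.commute)
  also have "\<dots> = (\<Sum>e\<le>q. of_nat (q choose e) * ((EE * Acal (q - e)) $ m * fact m))"
  proof -
    have "EE * (\<Sum>e\<le>q. fps_const (of_nat (q choose e)) * Acal (q - e)) = 
       (\<Sum>e\<le>q. fps_const (of_nat (q choose e)) * (EE * Acal (q - e)))"
      by (simp add: sum_distrib_left mult.left_commute)
    then show ?thesis unfolding N_fps by (simp add: fps_sum_nth sum_distrib_right mult.assoc)
  qed
  also have "\<dots> = Nnum m q"
  proof -
    have c: "(EE * F) $ m * fact m = (\<Sum>j\<le>m. of_nat (m choose j) * (fact j * F $ j))" for F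
      using EE_conv[of F m] by (simp add: mult.commute)
    show ?thesis unfolding Nnum_def Anum_def c ..
  qed
  finally show ?thesis .
qed

definition Sat :: "nat set \<Rightarrow> nat set \<Rightarrow> (nat \<times> nat) set set" where
  "Sat R S = {T. T \<subseteq> R \<times> S \<and> saturated T}"

definition row :: "(nat \<times> nat) set \<Rightarrow> nat \<Rightarrow> nat set" where
  "row T x = {y. (x, y) \<in> T}"

lemma finite_Sat[simp]: "finite R \<Longrightarrow> finite S \<Longrightarrow> finite (Sat R S)"
  unfolding Sat_def by (rule finite_subset[of _ "Pow (R \<times> S)"]) auto

lemma sat_rows_eq:
  assumes "saturated T" "(x, y) \<in> T" "(z, y) \<in> T"
  shows "row T x = row T z"
  using assms unfolding saturated_def row_def by blast

lemma glue_sat: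
  assumes C: "C \<subseteq> R" and D: "D \<subseteq> S" and T': "T' \<in> Sat (R - C) (S - D)"
  shows "C \<times> D \<union> T' \<in> Sat R S"
proof -
  have sub: "T' \<subseteq> (R - C) \<times> (S - D)" and st: "saturated T'" using T' by (auto simp: Sat_def)
  have "saturated (C \<times> D \<union> T')"
    unfolding saturated_def
  proof (intro allI impI)
    fix x y x' y'
    assume h: "(x, x') \<in> C \<times> D \<union> T' \<and> (x, y') \<in> C \<times> D \<union> T' \<and> (y, y') \<in> C \<times> D \<union> T'"
    show "(y, x') \<in> C \<times> D \<union> T'"
    proof (cases "x \<in> C")
      case True
      then have "(x, x') \<in> C \<times> D" "(x, y') \<in> C \<times> D" using h sub by auto
      then have "y \<in> C" using h sub by auto
      then show ?thesis using \<open>(x, x') \<in> C \<times> D\<close> by auto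
    next
      case False
      then have "(x, x') \<in> T'" "(x, y') \<in> T'" using h by auto
      then have "y' \<notin> D" using sub by auto
      then have "(y, y') \<in> T'" using h by auto
      then show ?thesis using st \<open>(x, x') \<in> T'\<close> \<open>(x, y') \<in> T'\<close> unfolding saturated_def by blast
    qed
  qed
  then show ?thesis using C D sub by (auto simp: Sat_def)
qed

definition Cls :: "nat set \<Rightarrow> (nat \<times> nat) set \<Rightarrow> nat \<Rightarrow> nat set" where
  "Cls R T a = {x \<in> R. row T x = row T a}"

lemma split_sat:
  assumes T: "T \<in> Sat R S" and a: "a \<in> R" and ne: "row T a \<noteq> {}"
  defines "C \<equiv> Cls R T a" and "D \<equiv> row T a"
  shows "T = C \<times> D \<union> (T - C \<times> D)" "T - C \<times> D \<in> Sat (R - C) (S - D)"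
    "a \<in> C" "C \<subseteq> R" "D \<subseteq> S"
proof -
  have sub: "T \<subseteq> R \<times> S" and st: "saturated T" using T by (auto simp: Sat_def)
  have key: "y \<notin> D" if "(x, y) \<in> T" "x \<notin> C" for x y
  proof
    assume "y \<in> D"
    then have "(a, y) \<in> T" by (simp add: D_def row_def)
    then have "row T x = row T a" using sat_rows_eq[OF st that(1)] by simp
    moreover have "x \<in> R" using that sub by auto
    ultimately show False using that(2) by (simp add: C_def Cls_def)
  qed
  show "T = C \<times> D \<union> (T - C \<times> D)"
  proof -
    have "C \<times> D \<subseteq> T" by (auto simp: C_def D_def Cls_def row_def)
    then show ?thesis by blast
  qed
  have sub2: "T - C \<times> D \<subseteq> (R - C) \<times> (S - D)"
  proof
    fix z assume z: "z \<in> T - C \<times> D"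
    obtain x y where zx: "z = (x, y)" by fastforce
    have "x \<notin> C"
    proof
      assume "x \<in> C"
      then have "row T x = D" by (simp add: C_def D_def Cls_def)
      then show False using z zx \<open>x \<in> C\<close> by (auto simp: row_def)
    qed
    then show "z \<in> (R - C) \<times> (S - D)" using key z zx sub by auto
  qed
  have "saturated (T - C \<times> D)"
    unfolding saturated_def
  proof (intro allI impI)
    fix x y x' y'
    assume h: "(x, x') \<in> T - C \<times> D \<and> (x, y') \<in> T - C \<times> D \<and> (y, y') \<in> T - C \<times> D"
    then have "(y, x') \<in> T" using st unfolding saturated_def by blast
    moreover have "y \<notin> C" using h sub2 by auto
    ultimately show "(y, x') \<in> T - C \<times> D" by auto
  qed
  then show "T - C \<times> D \<in> Sat (R - C) (S - D)" using sub2 by (simp add: Sat_def)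
  show "a \<in> C" using a by (simp add: C_def Cls_def)
  show "C \<subseteq> R" by (auto simp: C_def Cls_def)
  show "D \<subseteq> S" using sub by (auto simp: D_def row_def)
qed

lemma glue_props:
  assumes C: "a \<in> C" "C \<subseteq> R" and D: "D \<subseteq> S" "D \<noteq> {}" and T': "T' \<in> Sat (R - C) (S - D)"
  shows "row (C \<times> D \<union> T') a = D" "Cls R (C \<times> D \<union> T') a = C" "(C \<times> D \<union> T') - C \<times> D = T'"
proof -
  have sub: "T' \<subseteq> (R - C) \<times> (S - D)" using T' by (auto simp: Sat_def)
  show r: "row (C \<times> D \<union> T') a = D" using C sub by (auto simp: row_def)
  show "Cls R (C \<times> D \<union> T') a = C"
  proof -
    have "row (C \<times> D \<union> T') x \<noteq> D" if "x \<in> R" "x \<notin> C" for x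
    proof -
      have "row (C \<times> D \<union> T') x \<subseteq> S - D" using that sub by (auto simp: row_def)
      then show ?thesis using D by auto
    qed
    moreover have "row (C \<times> D \<union> T') x = D" if "x \<in> C" for x using that sub by (auto simp: row_def)
    ultimately show ?thesis unfolding Cls_def r using C by auto
  qed
  show "(C \<times> D \<union> T') - C \<times> D = T'" using sub by auto
qed

lemma count_decomp:
  assumes fR: "finite R" and fS: "finite S" and a: "a \<in> R"
    and DD: "DD \<subseteq> {D. D \<subseteq> S \<and> D \<noteq> {}}"
  shows "card {T \<in> Sat R S. row T a \<in> DD}
       = (\<Sum>C\<in>{C. a \<in> C \<and> C \<subseteq> R}. \<Sum>D\<in>DD. card (Sat (R - C) (S - D)))"
proof -
  define P where "P = {C. a \<in> C \<and> C \<subseteq> R} \<times> DD"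
  define f where "f = (\<lambda>((C, D), T'). C \<times> D \<union> (T' :: (nat \<times> nat) set))"
  have fP: "finite P" unfolding P_def
  proof (rule finite_cartesian_product)
    show "finite {C. a \<in> C \<and> C \<subseteq> R}" by (rule finite_subset[of _ "Pow R"]) (use fR in auto)
    show "finite DD" by (rule finite_subset[of _ "Pow S"]) (use fS DD in auto)
  qed
  have inj: "inj_on f (SIGMA (C, D):P. Sat (R - C) (S - D))"
  proof (rule inj_onI)
    fix x y assume x: "x \<in> (SIGMA (C, D):P. Sat (R - C) (S - D))" and y: "y \<in> (SIGMA (C, D):P. Sat (R - C) (S - D))"
      and e: "f x = f y"
    obtain p T' where xx0: "x = (p, T')" by (cases x)
    obtain C D where pp: "p = (C, D)" by (cases p)
    have xx: "x = ((C, D), T')" using xx0 pp by simp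
    obtain p2 T2 where yy0: "y = (p2, T2)" by (cases y)
    obtain C2 D2 where pp2: "p2 = (C2, D2)" by (cases p2)
    have yy: "y = ((C2, D2), T2)" using yy0 pp2 by simp
    have hx: "a \<in> C" "C \<subseteq> R" "D \<subseteq> S" "D \<noteq> {}" "T' \<in> Sat (R - C) (S - D)"
      using x xx DD by (auto simp: P_def)
    have hy: "a \<in> C2" "C2 \<subseteq> R" "D2 \<subseteq> S" "D2 \<noteq> {}" "T2 \<in> Sat (R - C2) (S - D2)"
      using y yy DD by (auto simp: P_def)
    have e2: "C \<times> D \<union> T' = C2 \<times> D2 \<union> T2" using e xx yy by (simp add: f_def)
    have "D = row (C \<times> D \<union> T') a" using glue_props(1)[OF hx] by (rule sym)
    also have "\<dots> = row (C2 \<times> D2 \<union> T2) a" by (simp only: e2)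
    also have "\<dots> = D2" using glue_props(1)[OF hy] .
    finally have DD2: "D = D2" .
    have "C = Cls R (C \<times> D \<union> T') a" using glue_props(2)[OF hx] by (rule sym)
    also have "\<dots> = Cls R (C2 \<times> D2 \<union> T2) a" by (simp only: e2)
    also have "\<dots> = C2" using glue_props(2)[OF hy] .
    finally have CC2: "C = C2" .
    have "T' = (C \<times> D \<union> T') - C \<times> D" using glue_props(3)[OF hx] by (rule sym)
    also have "\<dots> = (C2 \<times> D2 \<union> T2) - C2 \<times> D2" using e2 unfolding DD2 CC2 by simp
    also have "\<dots> = T2" using glue_props(3)[OF hy] .
    finally have "T' = T2" .
    then show "x = y" using xx yy DD2 CC2 by simp
  qed
  have img: "f ` (SIGMA (C, D):P. Sat (R - C) (S - D)) = {T \<in> Sat R S. row T a \<in> DD}"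
  proof
    show "f ` (SIGMA (C, D):P. Sat (R - C) (S - D)) \<subseteq> {T \<in> Sat R S. row T a \<in> DD}"
    proof
      fix T assume "T \<in> f ` (SIGMA (C, D):P. Sat (R - C) (S - D))"
      then obtain C D T' where h: "(C, D) \<in> P" "T' \<in> Sat (R - C) (S - D)" "T = C \<times> D \<union> T'"
        by (auto simp: f_def)
      have hx: "a \<in> C" "C \<subseteq> R" "D \<subseteq> S" "D \<noteq> {}" "D \<in> DD" using h DD by (auto simp: P_def)
      show "T \<in> {T \<in> Sat R S. row T a \<in> DD}"
        using glue_sat[OF hx(2,3) h(2)] glue_props(1)[OF hx(1-4) h(2)] h(3) hx(5) by simp
    qed
  next
    show "{T \<in> Sat R S. row T a \<in> DD} \<subseteq> f ` (SIGMA (C, D):P. Sat (R - C) (S - D))"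
    proof
      fix T assume T: "T \<in> {T \<in> Sat R S. row T a \<in> DD}"
      then have ne: "row T a \<noteq> {}" and TS: "T \<in> Sat R S" and TD: "row T a \<in> DD" using DD by auto
      note sp = split_sat[OF TS a ne]
      have "((Cls R T a, row T a), T - Cls R T a \<times> row T a) \<in> (SIGMA (C, D):P. Sat (R - C) (S - D))"
        using sp TD by (auto simp: P_def)
      moreover have "T = f ((Cls R T a, row T a), T - Cls R T a \<times> row T a)"
        using sp(1) by (simp add: f_def)
      ultimately show "T \<in> f ` (SIGMA (C, D):P. Sat (R - C) (S - D))" by blast
    qed
  qed
  have "card {T \<in> Sat R S. row T a \<in> DD} = card (SIGMA (C, D):P. Sat (R - C) (S - D))"
    using card_image[OF inj] img by simp
  also have "\<dots> = (\<Sum>(C, D)\<in>P. card (Sat (R - C) (S - D)))"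
    using fP fR fS by (subst card_SigmaI) (auto simp: case_prod_beta)
  also have "\<dots> = (\<Sum>C\<in>{C. a \<in> C \<and> C \<subseteq> R}. \<Sum>D\<in>DD. card (Sat (R - C) (S - D)))"
    unfolding P_def by (rule sum.cartesian_product[symmetric])
  finally show ?thesis .
qed

lemma H1:
  assumes "finite X"
  shows "(\<Sum>C\<in>Pow X. h (card C)) = (\<Sum>k\<le>card X. of_nat (card X choose k) * (h k :: real))"
proof -
  have "(\<Sum>C\<in>Pow X. h (card C)) = (\<Sum>k\<in>{..card X}. \<Sum>C\<in>{C. C \<in> Pow X \<and> card C = k}. h (card C))"
  proof (rule sum.group[symmetric])
    show "card ` Pow X \<subseteq> {..card X}" using assms by (auto intro: card_mono)
  qed (use assms in auto)
  also have "\<dots> = (\<Sum>k\<le>card X. of_nat (card X choose k) * h k)"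
  proof (intro sum.cong refl)
    fix k
    have "{C. C \<in> Pow X \<and> card C = k} = {B. B \<subseteq> X \<and> card B = k}" by auto
    then have "card {C. C \<in> Pow X \<and> card C = k} = card X choose k" using n_subsets[OF assms] by simp
    moreover have "(\<Sum>C\<in>{C. C \<in> Pow X \<and> card C = k}. h (card C)) = (\<Sum>C\<in>{C. C \<in> Pow X \<and> card C = k}. h k)"
      by (intro sum.cong) auto
    ultimately show "(\<Sum>C\<in>{C. C \<in> Pow X \<and> card C = k}. h (card C)) = of_nat (card X choose k) * h k"
      by simp
  qed
  finally show ?thesis .
qed

lemma H2:
  assumes "finite R" "a \<in> R"
  shows "(\<Sum>C\<in>{C. a \<in> C \<and> C \<subseteq> R}. h (card (R - C))) = (\<Sum>j\<le>card R - 1. of_nat (card R - 1 choose j) * (h j :: real))"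
proof -
  define X where "X = R - {a}"
  have fX: "finite X" using assms by (simp add: X_def)
  have cX: "card X = card R - 1" using assms by (simp add: X_def)
  have "(\<Sum>C\<in>{C. a \<in> C \<and> C \<subseteq> R}. h (card (R - C))) = (\<Sum>B\<in>Pow X. h (card B))"
  proof (rule sum.reindex_bij_witness[where i = "\<lambda>B. insert a (X - B)" and j = "\<lambda>C. R - C"])
    fix C assume "C \<in> {C. a \<in> C \<and> C \<subseteq> R}"
    then show "insert a (X - (R - C)) = C" "R - C \<in> Pow X" "h (card (R - C)) = h (card (R - C))"
      by (auto simp: X_def)
  next
    fix B assume "B \<in> Pow X"
    then show "R - insert a (X - B) = B" "insert a (X - B) \<in> {C. a \<in> C \<and> C \<subseteq> R}"
      using assms by (auto simp: X_def)
  qed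
  also have "\<dots> = (\<Sum>j\<le>card R - 1. of_nat (card R - 1 choose j) * h j)"
    using H1[OF fX] cX by simp
  finally show ?thesis .
qed

lemma H3:
  assumes "finite S"
  shows "(\<Sum>D\<in>{D. D \<subseteq> S \<and> D \<noteq> {}}. h (card (S - D))) = (\<Sum>e\<in>{1..card S}. of_nat (card S choose e) * (h (card S - e) :: real))"
proof -
  define g where "g = (\<lambda>k. if k = 0 then 0 else h (card S - k))"
  have "(\<Sum>D\<in>{D. D \<subseteq> S \<and> D \<noteq> {}}. h (card (S - D))) = (\<Sum>D\<in>Pow S - {{}}. g (card D))"
  proof (intro sum.cong)
    show "{D. D \<subseteq> S \<and> D \<noteq> {}} = Pow S - {{}}" by auto
  next
    fix D assume "D \<in> Pow S - {{}}"
    then show "h (card (S - D)) = g (card D)"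
      using assms by (auto simp: g_def card_Diff_subset finite_subset)
  qed
  also have "\<dots> = (\<Sum>D\<in>Pow S. g (card D))"
    using assms by (subst sum.remove[of "Pow S" "{}"]) (auto simp: g_def)
  also have "\<dots> = (\<Sum>k\<le>card S. of_nat (card S choose k) * g k)" by (rule H1[OF assms])
  also have "\<dots> = (\<Sum>e\<in>{1..card S}. of_nat (card S choose e) * h (card S - e))"
  proof -
    have "{..card S} = insert 0 {1..card S}" by auto
    then show ?thesis by (simp add: g_def)
  qed
  finally show ?thesis .
qed

lemma REV: "(\<Sum>e\<le>q. of_nat (q choose e) * f e) = (\<Sum>e\<le>q. of_nat (q choose e) * (f (q - e) :: real))"
proof -
  have "(\<Sum>e\<le>q. of_nat (q choose e) * f (q - e)) = (\<Sum>e=0..q. of_nat (q choose (q - e)) * (f (q - e) :: real))"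
    by (intro sum.cong) (auto simp: binomial_symmetric[symmetric] atMost_atLeast0)
  also have "\<dots> = (\<Sum>e=0..q. of_nat (q choose e) * f e)"
    using sum.atLeastAtMost_rev[of "\<lambda>e. of_nat (q choose e) * f e" 0 q] by simp
  finally show ?thesis by (simp add: atMost_atLeast0)
qed

lemma Sat_empty: "Sat {} S = {{}}"
  by (auto simp: Sat_def saturated_def)

lemma card_Sat: "finite R \<Longrightarrow> finite S \<Longrightarrow> real (card (Sat R S)) = Anum (card R) (card S)"
proof (induction "card R" arbitrary: R S rule: less_induct)
  case less
  show ?case
  proof (cases "R = {}")
    case True
    then show ?thesis by (simp add: Sat_empty Anum0)
  next
    case False
    then obtain r where r: "r \<in> R" by auto
    define m where "m = card R - 1"
    have "card R > 0" using r less.prems card_gt_0_iff by blast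
    then have cR: "card R = Suc m" by (simp add: m_def)
    define DD where "DD = {D. D \<subseteq> S \<and> D \<noteq> {}}"
    have split: "Sat R S = {T \<in> Sat R S. row T r = {}} \<union> {T \<in> Sat R S. row T r \<in> DD}"
      by (auto simp: DD_def Sat_def row_def)
    have e1: "{T \<in> Sat R S. row T r = {}} = Sat (R - {r}) S"
      by (auto simp: Sat_def row_def)
    have fin: "finite (Sat R S)" using less.prems by simp
    have "card (Sat R S) = card {T \<in> Sat R S. row T r = {}} + card {T \<in> Sat R S. row T r \<in> DD}"
      by (subst split, rule card_Un_disjoint) (use fin in \<open>auto simp: DD_def\<close>)
    also have "card {T \<in> Sat R S. row T r \<in> DD} = (\<Sum>C\<in>{C. r \<in> C \<and> C \<subseteq> R}. \<Sum>D\<in>DD. card (Sat (R - C) (S - D)))"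
      by (rule count_decomp) (use less.prems r in \<open>auto simp: DD_def\<close>)
    finally have "real (card (Sat R S)) = real (card (Sat (R - {r}) S)) + (\<Sum>C\<in>{C. r \<in> C \<and> C \<subseteq> R}. \<Sum>D\<in>DD. real (card (Sat (R - C) (S - D))))"
      unfolding e1 by simp
    also have "real (card (Sat (R - {r}) S)) = Anum m (card S)"
      using less.hyps[of "R - {r}" S] less.prems r cR by simp
    also have "(\<Sum>C\<in>{C. r \<in> C \<and> C \<subseteq> R}. \<Sum>D\<in>DD. real (card (Sat (R - C) (S - D))))
        = (\<Sum>C\<in>{C. r \<in> C \<and> C \<subseteq> R}. \<Sum>D\<in>DD. Anum (card (R - C)) (card (S - D)))"
    proof (intro sum.cong refl)
      fix C D assume C: "C \<in> {C. r \<in> C \<and> C \<subseteq> R}"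
      have "card (R - C) < card R"
        using C less.prems by (intro psubset_card_mono) auto
      then show "real (card (Sat (R - C) (S - D))) = Anum (card (R - C)) (card (S - D))"
        using less.hyps[of "R - C" "S - D"] less.prems by simp
    qed
    also have "\<dots> = (\<Sum>D\<in>DD. \<Sum>C\<in>{C. r \<in> C \<and> C \<subseteq> R}. Anum (card (R - C)) (card (S - D)))"
      by (rule sum.swap)
    also have "\<dots> = (\<Sum>D\<in>DD. \<Sum>j\<le>m. of_nat (m choose j) * Anum j (card (S - D)))"
    proof (intro sum.cong refl)
      fix D
      show "(\<Sum>C\<in>{C. r \<in> C \<and> C \<subseteq> R}. Anum (card (R - C)) (card (S - D))) = (\<Sum>j\<le>m. of_nat (m choose j) * Anum j (card (S - D)))"
        using H2[OF less.prems(1) r, where h="\<lambda>k. Anum k (card (S - D))"] by (simp add: m_def)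
    qed
    also have "\<dots> = (\<Sum>e\<in>{1..card S}. of_nat (card S choose e) * (\<Sum>j\<le>m. of_nat (m choose j) * Anum j (card S - e)))"
      unfolding DD_def by (rule H3[OF less.prems(2)])
    finally show ?thesis using cR by (simp add: Anum_rec)
  qed
qed

lemma card_N:
  assumes "a < n" "b < p"
  shows "real (card {T. tableau n p T \<and> saturated T \<and> (a, b) \<in> T}) = Nnum (n - 1) (p - 1)"
proof -
  define R where "R = {0..<n}"
  define S where "S = {0..<p}"
  define DD where "DD = {D. b \<in> D \<and> D \<subseteq> S}"
  have aR: "a \<in> R" and bS: "b \<in> S" using assms by (auto simp: R_def S_def)
  have cR: "card R = n" "card S = p" by (auto simp: R_def S_def)
  have eq: "{T. tableau n p T \<and> saturated T \<and> (a, b) \<in> T} = {T \<in> Sat R S. row T a \<in> DD}"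
    by (auto simp: tableau_def Sat_def R_def S_def DD_def row_def)
  have "card {T \<in> Sat R S. row T a \<in> DD} = (\<Sum>C\<in>{C. a \<in> C \<and> C \<subseteq> R}. \<Sum>D\<in>DD. card (Sat (R - C) (S - D)))"
    by (rule count_decomp) (use aR in \<open>auto simp: R_def S_def DD_def\<close>)
  then have "card {T. tableau n p T \<and> saturated T \<and> (a, b) \<in> T} = (\<Sum>C\<in>{C. a \<in> C \<and> C \<subseteq> R}. \<Sum>D\<in>DD. card (Sat (R - C) (S - D)))"
    unfolding eq .
  then have "real (card {T. tableau n p T \<and> saturated T \<and> (a, b) \<in> T}) = (\<Sum>C\<in>{C. a \<in> C \<and> C \<subseteq> R}. \<Sum>D\<in>DD. Anum (card (R - C)) (card (S - D)))"
    by (simp add: card_Sat R_def S_def)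
  also have "\<dots> = (\<Sum>C\<in>{C. a \<in> C \<and> C \<subseteq> R}. \<Sum>e\<le>p - 1. of_nat (p - 1 choose e) * Anum (card (R - C)) e)"
  proof (intro sum.cong refl)
    fix C
    have fS: "finite S" by (simp add: S_def)
    show "(\<Sum>D\<in>DD. Anum (card (R - C)) (card (S - D))) = (\<Sum>e\<le>p - 1. of_nat (p - 1 choose e) * Anum (card (R - C)) e)"
      using H2[OF fS bS, where h="\<lambda>k. Anum (card (R - C)) k"] cR unfolding DD_def by (simp add: conj_commute)
  qed
  also have "\<dots> = (\<Sum>e\<le>p - 1. \<Sum>C\<in>{C. a \<in> C \<and> C \<subseteq> R}. of_nat (p - 1 choose e) * Anum (card (R - C)) e)"
    by (rule sum.swap)
  also have "\<dots> = (\<Sum>e\<le>p - 1. of_nat (p - 1 choose e) * (\<Sum>j\<le>n - 1. of_nat (n - 1 choose j) * Anum j e))"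
  proof (intro sum.cong refl)
    fix e
    have fR: "finite R" by (simp add: R_def)
    show "(\<Sum>C\<in>{C. a \<in> C \<and> C \<subseteq> R}. of_nat (p - 1 choose e) * Anum (card (R - C)) e) = of_nat (p - 1 choose e) * (\<Sum>j\<le>n - 1. of_nat (n - 1 choose j) * Anum j e)"
      using H2[OF fR aR, where h="\<lambda>k. Anum k e"] cR by (simp add: sum_distrib_left[symmetric])
  qed
  also have "\<dots> = Nnum (n - 1) (p - 1)"
    unfolding Nnum_def by (rule REV)
  finally show ?thesis .
qed

lemma pderiv_sum': "pderiv (sum f A) = (\<Sum>x\<in>A. pderiv (f x))"
  using higher_pderiv_sum[of 1 f A] by simp

lemma part1:
  assumes "1 \<le> n" "1 \<le> p"
  shows "poly (pderiv (alpha_poly n p)) 1 = real n * real p * Nnum (n - 1) (p - 1)"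
proof -
  define R where "R = {0..<n}"
  define S where "S = {0..<p}"
  have fR: "finite R" and fS: "finite S" by (auto simp: R_def S_def)
  have fSat: "finite (Sat R S)" using fR fS by simp
  have eqj: "{T. tableau n p T \<and> saturated T \<and> card T = j} = {T \<in> Sat R S. card T = j}" for j
    by (auto simp: tableau_def Sat_def R_def S_def)
  have "poly (pderiv (alpha_poly n p)) 1 = (\<Sum>j\<le>n*p. real j * real (alpha_coeff j n p))"
    unfolding alpha_poly_def pderiv_sum' poly_sum by (simp add: pderiv_monom poly_monom)
  also have "\<dots> = (\<Sum>j\<le>n*p. \<Sum>T\<in>{T \<in> Sat R S. card T = j}. real (card T))"
    by (intro sum.cong refl) (simp add: alpha_coeff_def eqj)
  also have "\<dots> = (\<Sum>T\<in>Sat R S. real (card T))"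
  proof (rule sum.group)
    show "card ` Sat R S \<subseteq> {..n*p}"
    proof
      fix k assume "k \<in> card ` Sat R S"
      then obtain T where T: "T \<in> Sat R S" "k = card T" by auto
      have "card T \<le> card (R \<times> S)" using T fR fS by (intro card_mono) (auto simp: Sat_def)
      then show "k \<in> {..n*p}" using T by (simp add: R_def S_def card_cartesian_product)
    qed
  qed (use fSat in auto)
  also have "\<dots> = (\<Sum>T\<in>Sat R S. \<Sum>c\<in>R \<times> S. if c \<in> T then 1 else 0)"
  proof (intro sum.cong refl)
    fix T assume T: "T \<in> Sat R S"
    then have "T = {c \<in> R \<times> S. c \<in> T}" by (auto simp: Sat_def)
    then have "real (card T) = real (card {c \<in> R \<times> S. c \<in> T})" by simp
    also have "\<dots> = (\<Sum>c\<in>{c \<in> R \<times> S. c \<in> T}. 1)" by simp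
    also have "\<dots> = (\<Sum>c\<in>R \<times> S. if c \<in> T then 1 else 0)"
      using fR fS by (intro sum.inter_filter) simp
    finally show "real (card T) = (\<Sum>c\<in>R \<times> S. if c \<in> T then 1 else 0)" .
  qed
  also have "\<dots> = (\<Sum>c\<in>R \<times> S. \<Sum>T\<in>Sat R S. if c \<in> T then 1 else 0)"
    by (rule sum.swap)
  also have "\<dots> = (\<Sum>c\<in>R \<times> S. Nnum (n - 1) (p - 1))"
  proof (intro sum.cong refl)
    fix c assume c: "c \<in> R \<times> S"
    obtain x y where cx: "c = (x, y)" by (cases c)
    have xy: "x < n" "y < p" using c cx by (auto simp: R_def S_def)
    have "(\<Sum>T\<in>Sat R S. if c \<in> T then 1 else 0) = (\<Sum>T\<in>{T \<in> Sat R S. c \<in> T}. (1::real))"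
      using fSat by (intro sum.inter_filter[symmetric]) simp
    also have "\<dots> = real (card {T \<in> Sat R S. c \<in> T})" by simp
    also have "{T \<in> Sat R S. c \<in> T} = {T. tableau n p T \<and> saturated T \<and> (x, y) \<in> T}"
      using cx by (auto simp: tableau_def Sat_def R_def S_def)
    also have "real (card \<dots>) = Nnum (n - 1) (p - 1)" by (rule card_N[OF xy])
    finally show "(\<Sum>T\<in>Sat R S. if c \<in> T then 1 else 0) = Nnum (n - 1) (p - 1)" .
  qed
  also have "\<dots> = real n * real p * Nnum (n - 1) (p - 1)"
    by (simp add: R_def S_def card_cartesian_product)
  finally show ?thesis .
qed

theorem proposition2:
  fixes n p a b :: nat
  assumes "1 \<le> n" and "1 \<le> p" and "a < n" and "b < p"
  shows "real (card {T. tableau n p T \<and> saturated T \<and> (a, b) \<in> T})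
           = poly (pderiv (alpha_poly n p)) 1 / (real n * real p)
       \<and> poly (pderiv (alpha_poly n p)) 1 / (real n * real p)
           = - fact (n - 1) * (\<Sum>i = 0..n. rUC (n - i + 1) / fact (n - i) *
                 (\<Sum>lam\<in>partitions_of i.
                     poly (pderiv (P_part lam)) 1 * (1 + poly (P_part lam) 1) ^ (p - 1)
                     / part_fact lam))"
proof -
  have np: "real n * real p \<noteq> 0" using assms by simp
  have q: "poly (pderiv (alpha_poly n p)) 1 / (real n * real p) = Nnum (n - 1) (p - 1)"
    using part1[OF assms(1,2)] np by simp
  obtain m where m: "n = Suc m" using assms(1) by (cases n) auto
  have r: "- fact (n - 1) * (\<Sum>i = 0..n. rUC (n - i + 1) / fact (n - i) *
                 (\<Sum>lam\<in>partitions_of i.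
                     poly (pderiv (P_part lam)) 1 * (1 + poly (P_part lam) 1) ^ (p - 1)
                     / part_fact lam)) = Nnum (n - 1) (p - 1)"
    unfolding m using RHS_eq[of m "p - 1"] by simp
  show ?thesis using q r card_N[OF assms(3,4)] by simp
qed

end
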